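(* Let $N \ge 1$ be the sample size, $K$ the data dimension and $J$ an integer with $1 \le J < K$. Let $\delta_1 > \delta_2 > \cdots > \delta_K > 0$ be the eigenvalues of the sample variance-covariance matrix ${\bf S}_x = \frac{1}{N}\sum_{i=1}^N {\bf x}_i {\bf x}_i^\prime$ of (mean-centred) data ${\bf x}_1,\ldots,{\bf x}_N \in \mathbb{R}^K$, and let $$\hat{\tau}_{\rm ML} = \frac{1}{K-J}\sum_{j=J+1}^K \delta_j .$$ For $\tau = \sigma^2$ with $0 < \tau < \delta_J$, consider the concentrated codelength $$\mathcal{I}(\tau) = \frac{N(K-J) - KJ}{2}\log \tau + \frac{N}{2\tau}\sum_{j=1}^K \delta_j - \frac{N}{2\tau}\sum_{j=1}^J (\delta_j - \tau) + \frac{K-J+1}{2}\sum_{j=1}^J \log(\delta_j - \tau).$$ Then $\mathcal{I}$ has $(J+1)$ stationary points whose locations are the roots of the degree $n = J+1$ polynomial $$a_n \tau^n + a_{n-1}\tau^{n-1} + \cdots + a_1 \tau + a_0, \qquad (0 < \tau < \delta_J),$$ with coefficients $$a_0 = -\hat{\tau}_{\rm ML}\, e_J,$$ $$a_j = (-1)^{j+1}\left[\hat{\tau}_{\rm ML}\, e_{J-j} + \left(1 - \frac{(j-1)(J-1)}{N(K-J)} - \frac{K(J-j+1)}{N(K-J)}\right) e_{J-j+1}\right], \quad (1 \le j \le J),$$ $$a_n = (-1)^J\left[1 - \frac{J(J-1)}{N(K-J)}\right],$$ where $e_t = e_t(\delta_1,\ldots,\delta_J)$ denotes the $t$-th elementary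 symmetric polynomial in the $J$ variables $\delta_1,\ldots,\delta_J$ (with $e_0 = 1$). The MML estimate $\hat{\sigma}^2_{\rm MML}$ of the residual variance is the stationary point in the domain $0 < \tau < \delta_J$ that yields the smallest value of $\mathcal{I}$, and the MML estimates of the factor lengths are $\hat{\alpha}_j = (\delta_j - \hat{\sigma}^2_{\rm MML})^{1/2}$ for $j = 1,\ldots,J$.
   Context: Setting: the probabilistic PCA model ${\bf x}_i \sim N_K({\bf 0}, {\bf A}{\bf A}^\prime + \sigma^2 {\bf I}_K)$, $i=1,\ldots,N$, with factor load matrix ${\bf A} \in \mathbb{R}^{K\times J}$ having mutually orthogonal columns of lengths $\alpha_1,\ldots,\alpha_J$ and residual variance $\sigma^2>0$. The function $\mathcal{I}(\tau)$ above is the minimum message length (MML87) codelength of this model, up to additive constants, after the factor orientations have been set to the top $J$ eigenvectors of ${\bf S}_x$ and the factor lengths to $\alpha_j^2 = \delta_j - \sigma^2$; it is a function of $\tau=\sigma^2$ only. $\hat{\tau}_{\rm ML}$ is the maximum likelihood estimate of the residual variance. The paper assumes throughout that the eigenvalues of ${\bf S}_x$ are distinct and positive, ordered $\delta_1 > \cdots > \delta_K > 0$. *)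

theory Defs
  imports "HOL-Analysis.Analysis"
begin

text \<open>Eigenvalues are given as a function delta :: nat => real, indexed 1..K.\<close>

definition esym :: "(nat \<Rightarrow> real) \<Rightarrow> nat \<Rightarrow> nat \<Rightarrow> real" where
  "esym \<delta> J t = (\<Sum>S\<in>{S. S \<subseteq> {1..J} \<and> card S = t}. \<Prod>i\<in>S. \<delta> i)"

definition tau_ML :: "nat \<Rightarrow> nat \<Rightarrow> (nat \<Rightarrow> real) \<Rightarrow> real" where
  "tau_ML K J \<delta> = (1 / (real K - real J)) * (\<Sum>j=J+1..K. \<delta> j)"

definition codelen :: "nat \<Rightarrow> nat \<Rightarrow> nat \<Rightarrow> (nat \<Rightarrow> real) \<Rightarrow> real \<Rightarrow> real" where
  "codelen N K J \<delta> \<tau> =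
     (real N * (real K - real J) - real K * real J) / 2 * ln \<tau>
     + real N / (2 * \<tau>) * (\<Sum>j=1..K. \<delta> j)
     - real N / (2 * \<tau>) * (\<Sum>j=1..J. (\<delta> j - \<tau>))
     + (real K - real J + 1) / 2 * (\<Sum>j=1..J. ln (\<delta> j - \<tau>))"

definition coef :: "nat \<Rightarrow> nat \<Rightarrow> nat \<Rightarrow> (nat \<Rightarrow> real) \<Rightarrow> nat \<Rightarrow> real" where
  "coef N K J \<delta> j =
     (if j = 0 then - tau_ML K J \<delta> * esym \<delta> J J
      else if j \<le> J then
        (-1) ^ (j + 1) *
          (tau_ML K J \<delta> * esym \<delta> J (J - j)
           + (1 - (real j - 1) * (real J - 1) / (real N * (real K - real J))
                - real K * (real J - real j + 1) / (real N * (real K - real J)))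
             * esym \<delta> J (J - j + 1))
      else if j = J + 1 then
        (-1) ^ J * (1 - real J * (real J - 1) / (real N * (real K - real J)))
      else 0)"

definition statpoly :: "nat \<Rightarrow> nat \<Rightarrow> nat \<Rightarrow> (nat \<Rightarrow> real) \<Rightarrow> real \<Rightarrow> real" where
  "statpoly N K J \<delta> \<tau> = (\<Sum>j=0..J+1. coef N K J \<delta> j * \<tau> ^ j)"

end

theory Submission imports Defs begin
lemma prod_expand:
  "(\<Prod>j=1..J. \<delta> j - x) = (\<Sum>k=0..J. (-1)^k * esym \<delta> J (J-k) * x^k)"
proof -
  let ?A = "{1..J}"
  have cimg: "card ` Pow ?A \<subseteq> {0..J}"
  proof
    fix n assume "n \<in> card ` Pow ?A"
    then obtain X where "X \<subseteq> ?A" "n = card X" by auto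
    then show "n \<in> {0..J}" using card_mono[of ?A X] by simp
  qed
  have "(\<Prod>j\<in>?A. \<delta> j - x) = (\<Prod>j\<in>?A. \<delta> j + (-x))" by simp
  also have "\<dots> = (\<Sum>X\<in>Pow ?A. (\<Prod>j\<in>X. \<delta> j) * (\<Prod>j\<in>?A-X. -x))"
    by (rule prod_add) simp
  also have "\<dots> = (\<Sum>X\<in>Pow ?A. (\<Prod>j\<in>X. \<delta> j) * (-x)^(J - card X))"
  proof (rule sum.cong[OF refl])
    fix X assume "X \<in> Pow ?A"
    then have "X \<subseteq> ?A" by auto
    then have "card (?A - X) = J - card X"
      by (simp add: card_Diff_subset finite_subset)
    then show "(\<Prod>j\<in>X. \<delta> j) * (\<Prod>j\<in>?A-X. -x) = (\<Prod>j\<in>X. \<delta> j) * (-x)^(J - card X)"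
      by simp
  qed
  also have "\<dots> = (\<Sum>t\<in>{0..J}. \<Sum>X\<in>{X. X \<in> Pow ?A \<and> card X = t}. (\<Prod>j\<in>X. \<delta> j) * (-x)^(J - card X))"
    by (rule sum.group[OF _ _ cimg, symmetric]) simp_all
  also have "\<dots> = (\<Sum>t\<in>{0..J}. esym \<delta> J t * (-x)^(J - t))"
  proof (rule sum.cong[OF refl])
    fix t
    have "{X. X \<in> Pow ?A \<and> card X = t} = {S. S \<subseteq> ?A \<and> card S = t}" by auto
    then show "(\<Sum>X\<in>{X. X \<in> Pow ?A \<and> card X = t}. (\<Prod>j\<in>X. \<delta> j) * (-x)^(J - card X))
        = esym \<delta> J t * (-x)^(J - t)"
      unfolding esym_def by (simp add: sum_distrib_right)
  qed
  also have "\<dots> = (\<Sum>k\<in>{0..J}. esym \<delta> J (J + 0 - k) * (-x)^(J - (J + 0 - k)))"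
    by (rule sum.atLeastAtMost_rev[of "\<lambda>t. esym \<delta> J t * (-x)^(J - t)" 0 J])
  also have "\<dots> = (\<Sum>k=0..J. (-1)^k * esym \<delta> J (J-k) * x^k)"
  proof (rule sum.cong[OF refl])
    fix k assume "k \<in> {0..J}"
    then have e1: "J - (J - k) = k" by simp
    have e2: "J + 0 - k = J - k" by simp
    show "esym \<delta> J (J + 0 - k) * (-x)^(J - (J + 0 - k)) = (-1)^k * esym \<delta> J (J-k) * x^k"
      unfolding e1 e2 power_minus[of x] by (simp only: mult_ac)
  qed
  finally show ?thesis .
qed

lemma esym0: "esym \<delta> J 0 = 1"
proof -
  have "{S. S \<subseteq> {1..J} \<and> card S = 0} = {{}}"
  proof (intro equalityI subsetI)
    fix S assume "S \<in> {S. S \<subseteq> {1..J} \<and> card S = 0}"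
    then have "S \<subseteq> {1..J}" "card S = 0" by auto
    moreover have "finite S" using \<open>S \<subseteq> {1..J}\<close> finite_subset by blast
    ultimately show "S \<in> {{}}" by simp
  qed auto
  then show ?thesis unfolding esym_def by simp
qed

definition Pp :: "nat \<Rightarrow> (nat \<Rightarrow> real) \<Rightarrow> real \<Rightarrow> real" where
  "Pp J \<delta> x = (\<Sum>k=0..J. (-1)^k * esym \<delta> J (J-k) * x^k)"

definition Pd :: "nat \<Rightarrow> (nat \<Rightarrow> real) \<Rightarrow> real \<Rightarrow> real" where
  "Pd J \<delta> x = (\<Sum>k=0..J. (-1)^k * esym \<delta> J (J-k) * (real k * x^(k - Suc 0)))"

lemma Pp_deriv: "(Pp J \<delta> has_real_derivative Pd J \<delta> x) (at x)"
proof -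
  have "((\<lambda>x. \<Sum>k=0..J. (-1)^k * esym \<delta> J (J-k) * x^k) has_real_derivative
        (\<Sum>k=0..J. (-1)^k * esym \<delta> J (J-k) * (real k * x^(k - Suc 0)))) (at x)"
    by (intro DERIV_sum DERIV_cmult DERIV_pow)
  then show ?thesis unfolding Pp_def[abs_def] Pd_def by simp
qed

lemma lin_sum:
  fixes D B E :: "nat \<Rightarrow> real"
  shows "(\<Sum>j\<in>A. (\<alpha> * D j - t * B j + \<gamma> * E j) * x^j) =
    \<alpha> * (\<Sum>j\<in>A. D j * x^j) - t * (\<Sum>j\<in>A. B j * x^j) + \<gamma> * (\<Sum>j\<in>A. E j * x^j)"
  by (simp add: sum.distrib sum_subtractf sum_distrib_left algebra_simps)

lemma poly_ident:
  fixes N K J :: nat and \<delta> :: "nat \<Rightarrow> real"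
  assumes M: "real N * (real K - real J) \<noteq> 0"
  shows "statpoly N K J \<delta> x =
    (real N * (real K - real J) - real K * real J) / (real N * (real K - real J)) * (x * Pp J \<delta> x)
    - tau_ML K J \<delta> * Pp J \<delta> x
    + (real K - real J + 1) / (real N * (real K - real J)) * (x^2 * Pd J \<delta> x)"
proof -
  define M where "M = real N * (real K - real J)"
  define t where "t = tau_ML K J \<delta>"
  define a where "a k = (-1)^k * esym \<delta> J (J-k)" for k
  have M0: "M \<noteq> 0" using M unfolding M_def .
  have d: "x * Pp J \<delta> x = (\<Sum>j=0..J+1. (if j = 0 then 0 else a (j - 1)) * x^j)"
    unfolding Pp_def a_def
    by (simp add: sum.atLeast0_atMost_Suc_shift sum_distrib_left mult_ac del: sum.cl_ivl_Suc)
  have e: "x^2 * Pd J \<delta> x = (\<Sum>j=0..J+1. (if j = 0 then 0 else real (j - 1) * a (j - 1)) * x^j)"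
    unfolding Pd_def a_def
    apply (simp add: sum.atLeast0_atMost_Suc_shift sum_distrib_left del: sum.cl_ivl_Suc)
    apply (rule sum.cong[OF refl])
    subgoal for k by (cases k) (simp_all add: power2_eq_square mult_ac)
    done
  have b: "Pp J \<delta> x = (\<Sum>j=0..J+1. (if j \<le> J then a j else 0) * x^j)"
    unfolding Pp_def a_def by simp
  have "(real N * (real K - real J) - real K * real J) / (real N * (real K - real J)) * (x * Pp J \<delta> x)
    - tau_ML K J \<delta> * Pp J \<delta> x
    + (real K - real J + 1) / (real N * (real K - real J)) * (x^2 * Pd J \<delta> x)
    = (\<Sum>j=0..J+1. ((M - real K * real J) / M * (if j = 0 then 0 else a (j - 1))
        - t * (if j \<le> J then a j else 0)
        + (real K - real J + 1) / M * (if j = 0 then 0 else real (j - 1) * a (j - 1))) * x^j)"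
    unfolding d e M_def[symmetric] t_def[symmetric] unfolding b by (rule lin_sum[symmetric])
  also have "\<dots> = statpoly N K J \<delta> x"
    unfolding statpoly_def
  proof (rule sum.cong[OF refl])
    fix j assume j: "j \<in> {0..J+1}"
    consider "j = 0" | "1 \<le> j \<and> j \<le> J" | "j = J + 1"
      using j by fastforce
    then show "((M - real K * real J) / M * (if j = 0 then 0 else a (j - 1))
        - t * (if j \<le> J then a j else 0)
        + (real K - real J + 1) / M * (if j = 0 then 0 else real (j - 1) * a (j - 1))) * x^j
        = coef N K J \<delta> j * x ^ j"
    proof cases
      case 1
      then show ?thesis unfolding coef_def a_def t_def by simp
    next
      case 2
      then obtain m where 2: "j = Suc m" "Suc m \<le> J" by (cases j) auto
      have ji: "J - m = J - j + 1" using 2 by simp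
      have s1: "(-1::real) ^ (j+1) = (-1) ^ m" and s2: "(-1::real) ^ j = - ((-1) ^ m)" using 2 by simp_all
      then show ?thesis using 2 M0 unfolding coef_def a_def t_def M_def[symmetric]
        by (simp add: ji field_simps)
    next
      case 3
      then show ?thesis using M0 unfolding coef_def a_def t_def M_def[symmetric]
        by (simp add: esym0 field_simps)
    qed
  qed
  finally show ?thesis ..
qed


lemma alg_ident:
  fixes M \<tau> P Q n S t c g :: real
  assumes "M \<noteq> 0" "\<tau> \<noteq> 0" "P \<noteq> 0" "t = n * S / M"
  shows "c / M * (\<tau> * P) - t * P + g / M * (\<tau>^2 * Q) =
    (2 * \<tau>^2 * P / M) * (c / 2 * (1 / \<tau>) - n * S / (2 * \<tau>^2) + g / 2 * (Q / P))"
  using assms by (simp add: field_simps power2_eq_square)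

theorem theorem1:
  fixes N K J :: nat and \<delta> :: "nat \<Rightarrow> real"
  assumes "N \<ge> 1" and "1 \<le> J" and "J < K"
    and "\<And>i j. 1 \<le> i \<Longrightarrow> i < j \<Longrightarrow> j \<le> K \<Longrightarrow> \<delta> i > \<delta> j"
    and "\<delta> K > 0"
  shows "\<forall>\<tau>. 0 < \<tau> \<and> \<tau> < \<delta> J \<longrightarrow>
           codelen N K J \<delta> differentiable (at \<tau>) \<and>
           (deriv (codelen N K J \<delta>) \<tau> = 0 \<longleftrightarrow> statpoly N K J \<delta> \<tau> = 0)"
proof (intro allI impI)
  fix \<tau> :: real assume "0 < \<tau> \<and> \<tau> < \<delta> J"
  then have t0: "0 < \<tau>" and tJ: "\<tau> < \<delta> J" by auto
  define M where "M = real N * (real K - real J)"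
  define c1 where "c1 = real N * (real K - real J) - real K * real J"
  define S where "S = (\<Sum>j=J+1..K. \<delta> j)"
  define U where "U = {0<..<\<delta> J}"
  have M0: "M > 0" unfolding M_def using assms(1,3) by simp
  have dpos: "\<delta> j - y > 0" if "1 \<le> j" "j \<le> J" "y < \<delta> J" for j y
  proof (cases "j = J")
    case False
    then have "\<delta> j > \<delta> J" using assms(4)[of j J] that assms(3) by simp
    then show ?thesis using that by simp
  qed (use that in simp)
  have Ppos: "Pp J \<delta> y > 0" if "y < \<delta> J" for y
  proof -
    have "(\<Prod>j=1..J. \<delta> j - y) > 0" by (rule prod_pos) (use dpos that in auto)
    then show ?thesis unfolding Pp_def prod_expand .
  qed
  have sumK: "(\<Sum>j=1..K. \<delta> j) = (\<Sum>j=1..J. \<delta> j) + S"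
  proof -
    have "K = J + (K - J)" using assms(3) by simp
    then have "(\<Sum>j=1..K. \<delta> j) = (\<Sum>j=1..J + (K - J). \<delta> j)" by simp
    also have "\<dots> = (\<Sum>j=1..J. \<delta> j) + (\<Sum>j=J+1..J + (K - J). \<delta> j)"
      by (rule sum.ub_add_nat) simp
    also have "J + (K - J) = K" using assms(3) by simp
    finally show ?thesis unfolding S_def .
  qed
  define g where "g y = c1 / 2 * ln y + real N * S / (2 * y) + real N * real J / 2
      + (real K - real J + 1) / 2 * ln (Pp J \<delta> y)" for y
  define D where "D = c1 / 2 * (1 / \<tau>) - real N * S / (2 * \<tau>^2)
      + (real K - real J + 1) / 2 * (Pd J \<delta> \<tau> / Pp J \<delta> \<tau>)"
  have eq: "codelen N K J \<delta> y = g y" if "y \<in> U" for y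
  proof -
    have y0: "0 < y" "y < \<delta> J" using that unfolding U_def by auto
    have s1: "(\<Sum>j=1..J. \<delta> j - y) = (\<Sum>j=1..J. \<delta> j) - real J * y"
      by (simp add: sum_subtractf)
    have s2: "(\<Sum>j=1..J. ln (\<delta> j - y)) = ln (Pp J \<delta> y)"
    proof -
      have "ln (\<Prod>j=1..J. \<delta> j - y) = (\<Sum>j=1..J. ln (\<delta> j - y))"
        by (rule ln_prod) (use dpos y0 in auto)
      then show ?thesis unfolding Pp_def prod_expand by simp
    qed
    show ?thesis unfolding codelen_def g_def s1 s2 sumK c1_def
      using y0 by (simp add: field_simps)
  qed
  have gd: "(g has_real_derivative D) (at \<tau>)"
    unfolding g_def[abs_def] D_def
    using t0 Ppos[OF tJ]
    by (auto intro!: derivative_eq_intros Pp_deriv simp: field_simps power2_eq_square)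
  have cd: "(codelen N K J \<delta> has_real_derivative D) (at \<tau>)"
    by (rule has_field_derivative_transform_within_open[OF gd, of U])
       (use t0 tJ eq in \<open>auto simp: U_def\<close>)
  have "codelen N K J \<delta> differentiable (at \<tau>)"
    using cd real_differentiable_def by blast
  moreover have "deriv (codelen N K J \<delta>) \<tau> = D"
    using cd by (rule DERIV_imp_deriv)
  moreover have "statpoly N K J \<delta> \<tau> = (2 * \<tau>^2 * Pp J \<delta> \<tau> / M) * D"
  proof -
    have tm: "tau_ML K J \<delta> = S / (real K - real J)"
      unfolding tau_ML_def S_def by simp
    have KJ: "real K - real J \<noteq> 0" using assms(3) by simp
    have N0: "real N \<noteq> 0" using assms(1) by simp
    have tm2: "tau_ML K J \<delta> = real N * S / M" unfolding tm M_def using N0 by simp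
    show ?thesis
      unfolding poly_ident[OF M0[unfolded M_def, THEN less_imp_neq, symmetric]]
      unfolding D_def c1_def M_def[symmetric]
      by (rule alg_ident) (use t0 Ppos[OF tJ] M0 tm2 in auto)
  qed
  moreover have "2 * \<tau>^2 * Pp J \<delta> \<tau> / M \<noteq> 0" using t0 Ppos[OF tJ] M0 by simp
  ultimately show "codelen N K J \<delta> differentiable (at \<tau>) \<and>
           (deriv (codelen N K J \<delta>) \<tau> = 0 \<longleftrightarrow> statpoly N K J \<delta> \<tau> = 0)"
    by simp
qed

end
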